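(* Let $1\le b<\frac{n}{2}-1$ and let $T$ be a tree attaining the maximum value of $M_2$ over $\mathcal{CT}^*_{n,b}$. Then every vertex of degree $3$ in $T$ (if any) has at most one neighbor of degree $4$.
   Context: A chemical tree is a tree with maximum degree at most $4$. A branching vertex is a vertex of degree greater than $2$. $\mathcal{CT}^*_{n,b}$ is the class of all $n$-vertex chemical trees with exactly $b$ branching vertices. $M_2(G)=\sum_{uv\in E(G)}d_ud_v$, where $d_v$ is the degree of $v$. *)

theory Defs
  imports Complex_Main
begin

definition simple_graph :: "nat \<Rightarrow> nat set set \<Rightarrow> bool" where
  "simple_graph n E \<longleftrightarrow> (\<forall>e\<in>E. card e = 2 \<and> e \<subseteq> {..<n})"

definition adj :: "nat set set \<Rightarrow> nat \<Rightarrow> nat \<Rightarrow> bool" where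
  "adj E u v \<longleftrightarrow> {u, v} \<in> E"

definition deg :: "nat set set \<Rightarrow> nat \<Rightarrow> nat" where
  "deg E v = card {e\<in>E. v \<in> e}"

definition connected_graph :: "nat \<Rightarrow> nat set set \<Rightarrow> bool" where
  "connected_graph n E \<longleftrightarrow>
     (\<forall>u<n. \<forall>v<n. (u, v) \<in> {(x, y). adj E x y}\<^sup>*)"

definition has_cycle :: "nat set set \<Rightarrow> bool" where
  "has_cycle E \<longleftrightarrow> (\<exists>vs. length vs \<ge> 3 \<and> distinct vs \<and>
      (\<forall>i < length vs - 1. adj E (vs ! i) (vs ! Suc i)) \<and> adj E (last vs) (hd vs))"

definition is_tree :: "nat \<Rightarrow> nat set set \<Rightarrow> bool" where
  "is_tree n E \<longleftrightarrow> n \<ge> 1 \<and> simple_graph n E \<and> connected_graph n E \<and> \<not> has_cycle E"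

definition branching_vertices :: "nat \<Rightarrow> nat set set \<Rightarrow> nat set" where
  "branching_vertices n E = {v\<in>{..<n}. deg E v > 2}"

text \<open>CT*_{n,b}: chemical trees (max degree <= 4) on n vertices with exactly b branching vertices.
  Vertices are labelled 0..n-1; every n-vertex tree is isomorphic to one of these.\<close>
definition CT_star :: "nat \<Rightarrow> nat \<Rightarrow> nat set set set" where
  "CT_star n b = {E. is_tree n E \<and> (\<forall>v<n. deg E v \<le> 4) \<and> card (branching_vertices n E) = b}"

definition M2 :: "nat set set \<Rightarrow> nat" where
  "M2 E = (\<Sum>e\<in>E. \<Prod>v\<in>e. deg E v)"

end

theory Submission
  imports Defs
begin


definition reach :: "nat set set \<Rightarrow> nat \<Rightarrow> nat \<Rightarrow> bool" where
  "reach E x y \<longleftrightarrow> (x, y) \<in> {(x, y). adj E x y}\<^sup>*"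

definition acyc :: "nat set set \<Rightarrow> bool" where
  "acyc E \<longleftrightarrow> (\<forall>u w. {u, w} \<in> E \<longrightarrow> \<not> reach (E - {{u, w}}) u w)"

lemma reach_refl[simp]: "reach E x x"
  by (simp add: reach_def)

lemma reach_step: "reach E x y \<Longrightarrow> {y, z} \<in> E \<Longrightarrow> reach E x z"
  unfolding reach_def adj_def by (simp add: rtrancl.rtrancl_into_rtrancl)

lemma reach_edge: "{x, y} \<in> E \<Longrightarrow> reach E x y"
  using reach_step[of E x x y] by simp

lemma reach_trans: "reach E x y \<Longrightarrow> reach E y z \<Longrightarrow> reach E x z"
  unfolding reach_def by simp

lemma reach_induct[consumes 1, case_names refl step]:
  assumes "reach E x y" "P x" "\<And>y z. reach E x y \<Longrightarrow> {y, z} \<in> E \<Longrightarrow> P y \<Longrightarrow> P z"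
  shows "P y"
  using assms(1) unfolding reach_def
proof (induction rule: rtrancl_induct)
  case base thus ?case using assms(2) by simp
next
  case (step y z) thus ?case using assms(3)[of y z] unfolding reach_def adj_def by simp
qed

lemma reach_sym: "reach E x y \<Longrightarrow> reach E y x"
proof (induction rule: reach_induct)
  case refl thus ?case by simp
next
  case (step y z)
  have "{z, y} \<in> E" using step(2) by (simp add: insert_commute)
  hence "reach E z y" by (rule reach_edge)
  thus ?case using step(3) by (rule reach_trans)
qed

lemma reach_mono: "reach E x y \<Longrightarrow> E \<subseteq> F \<Longrightarrow> reach F x y"
proof (induction rule: reach_induct)
  case refl thus ?case by simp
next
  case (step y z) thus ?case using reach_step by blast
qed

lemma reach_split_first:
  assumes "reach F x y"
  shows "reach (F - {e}) x y \<or> (\<exists>p q. e = {p, q} \<and> reach (F - {e}) x p \<and> reach F q y)"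
  using assms
proof (induction rule: reach_induct)
  case refl thus ?case by simp
next
  case (step y z)
  show ?case
  proof (cases "{y, z} = e")
    case True
    show ?thesis using step(3)
    proof
      assume "reach (F - {e}) x y"
      thus ?thesis using True by (intro disjI2 exI[of _ y] exI[of _ z]) auto
    next
      assume "\<exists>p q. e = {p, q} \<and> reach (F - {e}) x p \<and> reach F q y"
      then obtain p q where "e = {p, q}" "reach (F - {e}) x p" "reach F q y" by blast
      thus ?thesis using step(2) reach_step by blast
    qed
  next
    case False
    hence "{y, z} \<in> F - {e}" using step(2) by simp
    thus ?thesis using step(3) reach_step by blast
  qed
qed

lemma reach_split_two:
  assumes "reach (insert f H) x y"
  shows "reach H x y \<or> (\<exists>p q. f = {p, q} \<and> reach H x p \<and> reach H q y)"
  using assms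
proof (induction rule: reach_induct)
  case refl thus ?case by simp
next
  case (step y z)
  show ?case
  proof (cases "{y, z} = f")
    case True
    show ?thesis using step(3)
    proof
      assume "reach H x y"
      thus ?thesis using True by (intro disjI2 exI[of _ y] exI[of _ z]) auto
    next
      assume "\<exists>p q. f = {p, q} \<and> reach H x p \<and> reach H q y"
      then obtain p q where pq: "f = {p, q}" "reach H x p" "reach H q y" by blast
      have "p = y \<or> p = z" using pq(1) True by (metis doubleton_eq_iff insertI1 insert_iff)
      thus ?thesis
      proof
        assume "p = z" thus ?thesis using pq by simp
      next
        assume "p = y" thus ?thesis using pq True by (intro disjI2 exI[of _ y] exI[of _ z]) auto
      qed
    qed
  next
    case False
    hence "{y, z} \<in> H" using step(2) by simp
    thus ?thesis using step(3) reach_step by blast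
  qed
qed

lemma simple_path:
  assumes "reach F x y"
  shows "\<exists>vs. vs \<noteq> [] \<and> hd vs = x \<and> last vs = y \<and> distinct vs \<and>
           (\<forall>i < length vs - 1. adj F (vs ! i) (vs ! Suc i))"
  using assms
proof (induction rule: reach_induct)
  case refl thus ?case by (intro exI[of _ "[x]"]) simp
next
  case (step y z)
  then obtain vs where vs: "vs \<noteq> []" "hd vs = x" "last vs = y" "distinct vs"
     "\<forall>i < length vs - 1. adj F (vs ! i) (vs ! Suc i)" by blast
  show ?case
  proof (cases "z \<in> set vs")
    case True
    then obtain j where j: "j < length vs" "vs ! j = z" by (metis in_set_conv_nth)
    let ?ws = "take (Suc j) vs"
    have "?ws \<noteq> []" using vs(1) by simp
    moreover have "hd ?ws = x" using vs(1,2) by (simp add: hd_take)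
    moreover have "last ?ws = z"
    proof -
      have "?ws \<noteq> []" using vs(1) by simp
      hence "last ?ws = ?ws ! (length ?ws - 1)" by (rule last_conv_nth)
      also have "length ?ws - 1 = j" using j(1) by simp
      also have "?ws ! j = vs ! j" by simp
      finally show ?thesis using j(2) by simp
    qed
    moreover have "distinct ?ws" using vs(4) by simp
    moreover have "\<forall>i < length ?ws - 1. adj F (?ws ! i) (?ws ! Suc i)"
      using vs(5) j(1) by auto
    ultimately show ?thesis by blast
  next
    case False
    let ?ws = "vs @ [z]"
    have "?ws \<noteq> []" by simp
    moreover have "hd ?ws = x" using vs(1,2) by simp
    moreover have "last ?ws = z" by simp
    moreover have "distinct ?ws" using vs(4) False by simp
    moreover have "\<forall>i < length ?ws - 1. adj F (?ws ! i) (?ws ! Suc i)"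
    proof (intro allI impI)
      fix i assume i: "i < length ?ws - 1"
      show "adj F (?ws ! i) (?ws ! Suc i)"
      proof (cases "Suc i < length vs")
        case True thus ?thesis using vs(5) i by (simp add: nth_append)
      next
        case False
        hence "i = length vs - 1" using i by simp
        moreover have "vs ! (length vs - 1) = y" using vs(1,3) by (simp add: last_conv_nth)
        ultimately show ?thesis using step(2) vs(1) False by (simp add: nth_append adj_def)
      qed
    qed
    ultimately show ?thesis by blast
  qed
qed

lemma acyc_imp_no_cycle:
  assumes "acyc E"
  shows "\<not> has_cycle E"
proof
  assume "has_cycle E"
  then obtain vs where vs: "length vs \<ge> 3" "distinct vs"
    "\<forall>i < length vs - 1. adj E (vs ! i) (vs ! Suc i)" "adj E (last vs) (hd vs)"
    unfolding has_cycle_def by blast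
  let ?e = "{hd vs, last vs}"
  have eE: "?e \<in> E" using vs(4) by (simp add: adj_def insert_commute)
  have vsne: "vs \<noteq> []" using vs(1) by auto
  have hd0: "hd vs = vs ! 0" using vsne by (simp add: hd_conv_nth)
  have lastn: "last vs = vs ! (length vs - 1)" using vsne by (simp add: last_conv_nth)
  have "\<forall>k < length vs. reach (E - {?e}) (hd vs) (vs ! k)"
  proof (intro allI)
    fix k show "k < length vs \<longrightarrow> reach (E - {?e}) (hd vs) (vs ! k)"
    proof (induction k)
      case 0 thus ?case using hd0 by simp
    next
      case (Suc k)
      show ?case
      proof
        assume k: "Suc k < length vs"
        have ed: "{vs ! k, vs ! Suc k} \<in> E" using vs(3) k unfolding adj_def by simp
        have ne: "{vs ! k, vs ! Suc k} \<noteq> ?e"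
        proof
          assume eq: "{vs ! k, vs ! Suc k} = ?e"
          have eq': "{vs ! k, vs ! Suc k} = {vs ! 0, vs ! (length vs - 1)}" using eq hd0 lastn by simp
          have "vs ! Suc k \<in> {vs ! k, vs ! Suc k}" by simp
          hence a1: "vs ! Suc k \<in> {vs ! 0, vs ! (length vs - 1)}" by (simp only: eq')
          have "vs ! k \<in> {vs ! k, vs ! Suc k}" by simp
          hence a2: "vs ! k \<in> {vs ! 0, vs ! (length vs - 1)}" by (simp only: eq')
          have l1: "length vs - 1 < length vs" using vs(1) by simp
          have "Suc k \<noteq> 0" by simp
          hence "vs ! Suc k \<noteq> vs ! 0" using nth_eq_iff_index_eq[OF vs(2) k, of 0] vsne by simp
          hence "vs ! Suc k = vs ! (length vs - 1)" using a1 by blast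
          hence sk: "Suc k = length vs - 1" using nth_eq_iff_index_eq[OF vs(2) k l1] by simp
          have k': "k < length vs" using k by simp
          have "k \<noteq> length vs - 1" using sk by simp
          hence "vs ! k \<noteq> vs ! (length vs - 1)" using nth_eq_iff_index_eq[OF vs(2) k' l1] by simp
          hence "vs ! k = vs ! 0" using a2 by blast
          hence "k = 0" using nth_eq_iff_index_eq[OF vs(2) k', of 0] vsne by simp
          thus False using sk vs(1) by simp
        qed
        show "reach (E - {?e}) (hd vs) (vs ! Suc k)"
          using Suc k ed ne reach_step[of "E - {?e}" "hd vs" "vs ! k" "vs ! Suc k"] by simp
      qed
    qed
  qed
  hence "reach (E - {?e}) (hd vs) (last vs)" using lastn vs(1) by simp
  thus False using assms eE unfolding acyc_def by blast
qed

lemma no_cycle_imp_acyc: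
  assumes "simple_graph n E" "\<not> has_cycle E"
  shows "acyc E"
  unfolding acyc_def
proof (intro allI impI notI)
  fix u w assume uw: "{u, w} \<in> E" and r: "reach (E - {{u, w}}) u w"
  have "card {u, w} = 2" using assms(1) uw unfolding simple_graph_def by blast
  hence "u \<noteq> w" by (cases "u = w") auto
  obtain vs where vs: "vs \<noteq> []" "hd vs = u" "last vs = w" "distinct vs"
     "\<forall>i < length vs - 1. adj (E - {{u, w}}) (vs ! i) (vs ! Suc i)"
    using simple_path[OF r] by blast
  have hd0: "hd vs = vs ! 0" using vs(1) by (simp add: hd_conv_nth)
  have lastn: "last vs = vs ! (length vs - 1)" using vs(1) by (simp add: last_conv_nth)
  have "length vs \<noteq> 1"
  proof
    assume "length vs = 1"
    thus False using hd0 lastn vs(2,3) \<open>u \<noteq> w\<close> by simp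
  qed
  moreover have "length vs \<noteq> 2"
  proof
    assume l2: "length vs = 2"
    hence "adj (E - {{u, w}}) (vs ! 0) (vs ! 1)" using vs(5) by simp
    moreover have "vs ! 0 = u" using hd0 vs(2) by simp
    moreover have "vs ! 1 = w" using lastn vs(3) l2 by simp
    ultimately show False by (simp add: adj_def)
  qed
  moreover have "length vs \<noteq> 0" using vs(1) by simp
  ultimately have "length vs \<ge> 3" by linarith
  moreover have "\<forall>i < length vs - 1. adj E (vs ! i) (vs ! Suc i)" using vs(5) by (auto simp: adj_def)
  moreover have "adj E (last vs) (hd vs)" using vs uw by (simp add: adj_def insert_commute)
  ultimately have "has_cycle E" using vs(4) unfolding has_cycle_def by blast
  thus False using assms(2) by simp
qed



lemma connected_reach: "connected_graph n E \<longleftrightarrow> (\<forall>u<n. \<forall>v<n. reach E u v)"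
  unfolding connected_graph_def reach_def by simp

lemma reach_remove_edge:
  assumes "reach E a u"
  shows "reach (E - {{a, b}}) a u \<or> reach (E - {{a, b}}) b u"
  using assms
proof (induction rule: reach_induct)
  case refl thus ?case by simp
next
  case (step y z)
  show ?case
  proof (cases "{y, z} = {a, b}")
    case True
    hence "z = a \<or> z = b" by (metis doubleton_eq_iff)
    thus ?thesis by auto
  next
    case False
    hence "{y, z} \<in> E - {{a, b}}" using step(2) by simp
    thus ?thesis using step(3) reach_step by blast
  qed
qed

lemma rot_notin:
  assumes ac: "acyc E" and ab: "{a, b} \<in> E" and bc: "reach (E - {{a, b}}) b c"
  shows "{a, c} \<notin> E - {{a, b}}"
proof
  assume "{a, c} \<in> E - {{a, b}}"
  hence "reach (E - {{a, b}}) a c" by (rule reach_edge)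
  hence "reach (E - {{a, b}}) a b" using bc reach_sym reach_trans by blast
  thus False using ac ab unfolding acyc_def by blast
qed

lemma rot_simple:
  assumes sg: "simple_graph n E" and ab: "{a, b} \<in> E" and "c < n" "c \<noteq> a"
  shows "simple_graph n (insert {a, c} (E - {{a, b}}))"
proof -
  have "a < n" using sg ab unfolding simple_graph_def by blast
  thus ?thesis using sg assms unfolding simple_graph_def by auto
qed

lemma rot_connected:
  assumes cn: "connected_graph n E" and ab: "{a, b} \<in> E" and a: "a < n"
    and bc: "reach (E - {{a, b}}) b c"
  shows "connected_graph n (insert {a, c} (E - {{a, b}}))"
proof -
  let ?E' = "insert {a, c} (E - {{a, b}})"
  have sub: "E - {{a, b}} \<subseteq> ?E'" by blast
  have key: "reach ?E' a u" if "u < n" for u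
  proof -
    have "reach E a u" using cn a that unfolding connected_reach by blast
    hence "reach (E - {{a, b}}) a u \<or> reach (E - {{a, b}}) b u" by (rule reach_remove_edge)
    thus ?thesis
    proof
      assume "reach (E - {{a, b}}) a u" thus ?thesis using sub reach_mono by blast
    next
      assume bu: "reach (E - {{a, b}}) b u"
      have "reach ?E' a c" by (rule reach_edge) simp
      moreover have "reach ?E' c b" using reach_sym[OF bc] sub reach_mono by blast
      moreover have "reach ?E' b u" using bu sub reach_mono by blast
      ultimately show ?thesis using reach_trans by blast
    qed
  qed
  show ?thesis unfolding connected_reach
    using key reach_sym reach_trans by blast
qed

lemma rot_acyc_aux:
  assumes ac: "acyc E" and ab: "{a, b} \<in> E" and bc: "reach (E - {{a, b}}) b c"
    and e: "{u, w} \<in> E" "{u, w} \<noteq> {a, b}"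
    and ua: "reach (E - {{a, b}} - {{u, w}}) u a" and cw: "reach (E - {{a, b}} - {{u, w}}) c w"
  shows False
proof -
  let ?H = "E - {{a, b}} - {{u, w}}"
  let ?F = "E - {{u, w}}"
  have HF: "?H \<subseteq> ?F" by blast
  have HG: "?H \<subseteq> E - {{a, b}}" by blast
  have abF: "reach ?F a b" by (rule reach_edge) (use ab e in auto)
  have noF: "\<not> reach ?F u w" using ac e unfolding acyc_def by blast
  have noab: "\<not> reach (E - {{a, b}}) a b" using ac ab unfolding acyc_def by blast
  from reach_split_first[OF bc, of "{u, w}"]
  show False
  proof
    assume "reach ?H b c"
    hence "reach ?F u w" using ua cw abF HF reach_mono reach_trans by meson
    thus False using noF by simp
  next
    assume "\<exists>p q. {u, w} = {p, q} \<and> reach ?H b p \<and> reach (E - {{a, b}}) q c"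
    then obtain p q where pq: "{u, w} = {p, q}" "reach ?H b p" by blast
    have "p = u \<or> p = w" using pq(1) by (metis doubleton_eq_iff)
    thus False
    proof
      assume "p = u"
      hence "reach ?H b a" using pq(2) ua reach_trans by blast
      hence "reach (E - {{a, b}}) a b" using HG reach_mono reach_sym by blast
      thus False using noab by simp
    next
      assume "p = w"
      hence "reach ?H b w" using pq(2) by simp
      hence "reach ?F u w" using ua abF HF reach_mono reach_trans by meson
      thus False using noF by simp
    qed
  qed
qed

lemma rot_acyc:
  assumes ac: "acyc E" and ab: "{a, b} \<in> E" and bc: "reach (E - {{a, b}}) b c"
  shows "acyc (insert {a, c} (E - {{a, b}}))"
  unfolding acyc_def
proof (intro allI impI notI)
  let ?H0 = "E - {{a, b}}"
  let ?E' = "insert {a, c} ?H0"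
  have notin: "{a, c} \<notin> ?H0" using rot_notin[OF ac ab bc] .
  have noab: "\<not> reach ?H0 a b" using ac ab unfolding acyc_def by blast
  fix u w assume uw: "{u, w} \<in> ?E'" and r: "reach (?E' - {{u, w}}) u w"
  show False
  proof (cases "{u, w} = {a, c}")
    case True
    have "?E' - {{u, w}} = ?H0" using True notin by auto
    hence r0: "reach ?H0 u w" using r by simp
    have "u = a \<and> w = c \<or> u = c \<and> w = a" using True by (metis doubleton_eq_iff)
    hence "reach ?H0 a c" using r0 reach_sym by blast
    hence "reach ?H0 a b" using reach_sym[OF bc] reach_trans by blast
    thus False using noab by simp
  next
    case False
    hence e: "{u, w} \<in> E" "{u, w} \<noteq> {a, b}" using uw by auto
    let ?H = "E - {{a, b}} - {{u, w}}"
    have "?E' - {{u, w}} = insert {a, c} ?H" using False by auto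
    hence "reach (insert {a, c} ?H) u w" using r by simp
    from reach_split_two[OF this]
    show False
    proof
      assume "reach ?H u w"
      hence "reach (E - {{u, w}}) u w" using reach_mono by blast
      thus False using ac e unfolding acyc_def by blast
    next
      assume "\<exists>p q. {a, c} = {p, q} \<and> reach ?H u p \<and> reach ?H q w"
      then obtain p q where pq: "{a, c} = {p, q}" "reach ?H u p" "reach ?H q w" by blast
      have "p = a \<and> q = c \<or> p = c \<and> q = a" using pq(1) by (metis doubleton_eq_iff)
      thus False
      proof
        assume "p = a \<and> q = c"
        thus False using rot_acyc_aux[OF ac ab bc e] pq by blast
      next
        assume pa: "p = c \<and> q = a"
        have e': "{w, u} \<in> E" "{w, u} \<noteq> {a, b}" using e by (auto simp: insert_commute)
        have eq: "E - {{a, b}} - {{w, u}} = ?H" by (simp add: insert_commute)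
        have "reach ?H w a" using pq(3) pa reach_sym by blast
        moreover have "reach ?H c u" using pq(2) pa reach_sym by blast
        ultimately show False using rot_acyc_aux[OF ac ab bc e'] eq by simp
      qed
    qed
  qed
qed

lemma rot_deg:
  assumes fin: "finite E" and ab: "{a, b} \<in> E" and notin: "{a, c} \<notin> E - {{a, b}}"
    and "a \<noteq> b" "a \<noteq> c" "b \<noteq> c"
  shows "deg (insert {a, c} (E - {{a, b}})) w + (if w = b then 1 else 0)
       = deg E w + (if w = c then 1 else 0)"
proof -
  let ?S = "{e\<in>E. w \<in> e}"
  have finS: "finite ?S" using fin by simp
  have acab: "{a, c} \<noteq> {a, b}"
  proof
    assume "{a, c} = {a, b}"
    hence "c \<in> {a, b}" by blast
    thus False using assms by blast
  qed
  have acE: "{a, c} \<notin> E" using notin acab by blast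
  show ?thesis
  proof (cases "w = a")
    case True
    have "{e \<in> insert {a, c} (E - {{a, b}}). w \<in> e} = insert {a, c} (?S - {{a, b}})" using True by blast
    moreover have "card (insert {a, c} (?S - {{a, b}})) = card ?S"
    proof -
      have "{a, b} \<in> ?S" using ab True by simp
      hence "Suc (card (?S - {{a, b}})) = card ?S" by (rule card_Suc_Diff1[OF finS])
      hence "card (?S - {{a, b}}) + 1 = card ?S" by (simp only: Suc_eq_plus1)
      moreover have "{a, c} \<notin> ?S - {{a, b}}" using acE by blast
      ultimately show ?thesis using finS by simp
    qed
    ultimately show ?thesis using True assms unfolding deg_def by simp
  next
    case wa: False
    show ?thesis
    proof (cases "w = b")
      case True
      have "w \<notin> {a, c}" using True assms by simp
      hence "{e \<in> insert {a, c} (E - {{a, b}}). w \<in> e} = ?S - {{a, b}}" by blast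
      moreover have "{a, b} \<in> ?S" using ab True by simp
      hence "Suc (card (?S - {{a, b}})) = card ?S" by (rule card_Suc_Diff1[OF finS])
      hence "card (?S - {{a, b}}) + 1 = card ?S" by (simp only: Suc_eq_plus1)
      ultimately show ?thesis using True assms unfolding deg_def by simp
    next
      case wb: False
      show ?thesis
      proof (cases "w = c")
        case True
        have "{e \<in> insert {a, c} (E - {{a, b}}). w \<in> e} = insert {a, c} ?S" using True wa wb by blast
        moreover have "card (insert {a, c} ?S) = card ?S + 1" using acE finS by simp
        ultimately show ?thesis using True wb unfolding deg_def by simp
      next
        case False
        have "{e \<in> insert {a, c} (E - {{a, b}}). w \<in> e} = ?S" using False wa wb by blast
        thus ?thesis using False wb unfolding deg_def by simp
      qed
    qed
  qed
qed

lemma rot_sum: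
  fixes g :: "nat set \<Rightarrow> int"
  assumes fin: "finite E" and ab: "{a, b} \<in> E" and notin: "{a, c} \<notin> E - {{a, b}}"
  shows "sum g (insert {a, c} (E - {{a, b}})) = sum g E - g {a, b} + g {a, c}"
proof -
  have "sum g (insert {a, c} (E - {{a, b}})) = g {a, c} + sum g (E - {{a, b}})"
    using fin notin by simp
  also have "sum g (E - {{a, b}}) = sum g E - g {a, b}" using fin ab by (simp add: sum_diff1)
  finally show ?thesis by simp
qed



lemma reach_along:
  assumes "\<forall>i < length ps - 1. {ps ! i, ps ! Suc i} \<in> F"
  shows "k < length ps \<Longrightarrow> reach F (ps ! 0) (ps ! k)"
proof (induction k)
  case 0 thus ?case by simp
next
  case (Suc k)
  hence "reach F (ps ! 0) (ps ! k)" by simp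
  moreover have "{ps ! k, ps ! Suc k} \<in> F" using assms Suc.prems by simp
  ultimately show ?case by (rule reach_step)
qed

lemma card2_other:
  assumes "card e = 2" "w \<in> e"
  shows "\<exists>s. e = {w, s} \<and> s \<noteq> w"
proof -
  obtain p q where pq: "e = {p, q}" "p \<noteq> q" using assms(1) by (meson card_2_iff)
  show ?thesis
  proof (cases "w = p")
    case True thus ?thesis using pq by blast
  next
    case False
    hence "w = q" using assms(2) pq by blast
    thus ?thesis using pq by (intro exI[of _ p]) (auto simp: insert_commute)
  qed
qed

definition pinv :: "nat set set \<Rightarrow> nat \<Rightarrow> nat \<Rightarrow> nat list \<Rightarrow> bool" where
  "pinv T v x ps \<longleftrightarrow> distinct ps \<and> length ps \<ge> 2 \<and> ps ! 0 = v \<and> ps ! 1 = x \<and>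
     (\<forall>i < length ps - 1. {ps ! i, ps ! Suc i} \<in> T) \<and> deg T (last ps) = 4"

lemma pinv_extend:
  assumes sg: "simple_graph n T" and nc: "\<not> has_cycle T" and fin: "finite T"
    and inv: "pinv T v x ps"
  shows "\<exists>s. {last ps, s} \<in> T \<and> s \<notin> set ps"
proof (rule ccontr)
  assume H: "\<not> (\<exists>s. {last ps, s} \<in> T \<and> s \<notin> set ps)"
  let ?k = "length ps"
  let ?w = "last ps"
  have dist: "distinct ps" and len: "?k \<ge> 2" and adjs: "\<forall>i < ?k - 1. {ps ! i, ps ! Suc i} \<in> T"
    and dw: "deg T ?w = 4" using inv unfolding pinv_def by auto
  have ne: "ps \<noteq> []" using len by auto
  have wl: "?w = ps ! (?k - 1)" using ne by (simp add: last_conv_nth)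
  have sub: "{e\<in>T. ?w \<in> e} \<subseteq> {{?w, ps ! (?k - 2)}}"
  proof
    fix e assume e: "e \<in> {e\<in>T. ?w \<in> e}"
    have c2: "card e = 2" using e sg unfolding simple_graph_def by blast
    have we: "?w \<in> e" using e by simp
    obtain s where s: "e = {?w, s}" "s \<noteq> ?w" using card2_other[OF c2 we] by blast
    have "s \<in> set ps" using H s e by blast
    then obtain j where j: "j < ?k" "ps ! j = s" by (metis in_set_conv_nth)
    have "j \<noteq> ?k - 1" using j s(2) wl by auto
    moreover have "\<not> j < ?k - 2"
    proof
      assume jl: "j < ?k - 2"
      let ?cs = "drop j ps"
      have "length ?cs \<ge> 3" using jl by simp
      moreover have "distinct ?cs" using dist by simp
      moreover have "\<forall>i < length ?cs - 1. adj T (?cs ! i) (?cs ! Suc i)"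
      proof (intro allI impI)
        fix i assume "i < length ?cs - 1"
        hence "j + i < ?k - 1" by simp
        hence "{ps ! (j + i), ps ! Suc (j + i)} \<in> T" using adjs by simp
        thus "adj T (?cs ! i) (?cs ! Suc i)" using j(1) by (simp add: adj_def)
      qed
      moreover have "adj T (last ?cs) (hd ?cs)"
      proof -
        have "last ?cs = ?w" using jl by simp
        moreover have "hd ?cs = s" using j by (simp add: hd_drop_conv_nth)
        ultimately show ?thesis using e s by (simp add: adj_def)
      qed
      ultimately have "has_cycle T" unfolding has_cycle_def by blast
      thus False using nc by simp
    qed
    ultimately have "j = ?k - 2" using j(1) by linarith
    thus "e \<in> {{?w, ps ! (?k - 2)}}" using s j by simp
  qed
  have "card {e\<in>T. ?w \<in> e} \<le> 1" using card_mono[OF _ sub] by simp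
  thus False using dw unfolding deg_def by simp
qed

lemma pinv_vertices:
  assumes sg: "simple_graph n T" and inv: "pinv T v x ps"
  shows "set ps \<subseteq> {..<n}"
proof
  fix u assume "u \<in> set ps"
  then obtain i where i: "i < length ps" "ps ! i = u" by (metis in_set_conv_nth)
  have len: "length ps \<ge> 2" and adjs: "\<forall>i < length ps - 1. {ps ! i, ps ! Suc i} \<in> T"
    using inv unfolding pinv_def by auto
  show "u \<in> {..<n}"
  proof (cases "i < length ps - 1")
    case True
    hence "{ps ! i, ps ! Suc i} \<in> T" using adjs by simp
    thus ?thesis using sg i unfolding simple_graph_def by blast
  next
    case False
    hence "i - 1 < length ps - 1" "Suc (i - 1) = i" using i len by auto
    hence "{ps ! (i - 1), ps ! i} \<in> T" using adjs by metis
    thus ?thesis using sg i unfolding simple_graph_def by blast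
  qed
qed

lemma find_edge:
  assumes sg: "simple_graph n T" and nc: "\<not> has_cycle T" and fin: "finite T"
    and xv: "{x, v} \<in> T" and xy: "x \<noteq> y" and dx: "deg T x = 4"
  shows "\<exists>r s. {r, s} \<in> T \<and> deg T r = 4 \<and> deg T s \<noteq> 4 \<and>
           reach (T - {{y, v}} - {{r, s}}) v r"
proof (rule ccontr)
  assume NF: "\<not> ?thesis"
  have xv_ne: "x \<noteq> v"
  proof
    assume "x = v" hence "card {x, v} = 1" by simp
    thus False using sg xv unfolding simple_graph_def by fastforce
  qed
  have step: "\<exists>ps'. pinv T v x ps' \<and> length ps' = Suc (length ps)" if inv: "pinv T v x ps" for ps
  proof -
    obtain s where s: "{last ps, s} \<in> T" "s \<notin> set ps" using pinv_extend[OF sg nc fin inv] by blast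
    have dist: "distinct ps" and len: "length ps \<ge> 2" and p0: "ps ! 0 = v" and p1: "ps ! 1 = x"
      and adjs: "\<forall>i < length ps - 1. {ps ! i, ps ! Suc i} \<in> T"
      and dw: "deg T (last ps) = 4" using inv unfolding pinv_def by auto
    have ne: "ps \<noteq> []" using len by auto
    show ?thesis
    proof (cases "deg T s = 4")
      case False
      let ?F = "T - {{y, v}} - {{last ps, s}}"
      have "\<forall>i < length ps - 1. {ps ! i, ps ! Suc i} \<in> ?F"
      proof (intro allI impI)
        fix i assume i: "i < length ps - 1"
        have inT: "{ps ! i, ps ! Suc i} \<in> T" using adjs i by simp
        have n1: "{ps ! i, ps ! Suc i} \<noteq> {last ps, s}"
        proof
          assume "{ps ! i, ps ! Suc i} = {last ps, s}"
          hence "s \<in> {ps ! i, ps ! Suc i}" by blast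
          moreover have "ps ! i \<in> set ps" "ps ! Suc i \<in> set ps" using i by auto
          ultimately show False using s(2) by blast
        qed
        have n2: "{ps ! i, ps ! Suc i} \<noteq> {y, v}"
        proof
          assume eq: "{ps ! i, ps ! Suc i} = {y, v}"
          hence "v \<in> {ps ! i, ps ! Suc i}" by blast
          moreover have "ps ! Suc i \<noteq> ps ! 0" using dist i ne nth_eq_iff_index_eq[OF dist, of "Suc i" 0] by simp
          ultimately have "ps ! i = ps ! 0" using p0 by auto
          hence "i = 0" using dist i ne nth_eq_iff_index_eq[OF dist, of i 0] by simp
          hence "{ps ! 0, ps ! 1} = {y, v}" using eq by simp
          hence "x \<in> {y, v}" using p1 by blast
          thus False using xy xv_ne by blast
        qed
        show "{ps ! i, ps ! Suc i} \<in> ?F" using inT n1 n2 by blast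
      qed
      hence "reach ?F (ps ! 0) (ps ! (length ps - 1))" using reach_along[of ps ?F "length ps - 1"] ne by simp
      hence "reach ?F v (last ps)" using p0 ne by (simp add: last_conv_nth)
      thus ?thesis using NF s(1) dw False by blast
    next
      case True
      let ?ps = "ps @ [s]"
      have "pinv T v x ?ps"
        unfolding pinv_def
      proof (intro conjI)
        show "distinct ?ps" using dist s(2) by simp
        show "length ?ps \<ge> 2" using len by simp
        show "?ps ! 0 = v" using p0 ne by (simp add: nth_append)
        show "?ps ! 1 = x" using p1 len by (simp add: nth_append)
        show "deg T (last ?ps) = 4" using True by simp
        show "\<forall>i < length ?ps - 1. {?ps ! i, ?ps ! Suc i} \<in> T"
        proof (intro allI impI)
          fix i assume i: "i < length ?ps - 1"
          show "{?ps ! i, ?ps ! Suc i} \<in> T"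
          proof (cases "Suc i < length ps")
            case True thus ?thesis using adjs i by (simp add: nth_append)
          next
            case False
            hence "i = length ps - 1" using i by simp
            moreover have "ps ! (length ps - 1) = last ps" using ne by (simp add: last_conv_nth)
            ultimately show ?thesis using s(1) ne False by (simp add: nth_append)
          qed
        qed
      qed
      thus ?thesis by auto
    qed
  qed
  have base: "pinv T v x [v, x]"
    unfolding pinv_def using xv_ne xv dx by (simp add: insert_commute)
  have all: "\<exists>ps. pinv T v x ps \<and> length ps = Suc (Suc k)" for k
  proof (induction k)
    case 0 thus ?case using base by (intro exI[of _ "[v, x]"]) simp
  next
    case (Suc k) thus ?case using step by metis
  qed
  obtain ps where ps: "pinv T v x ps" "length ps = Suc (Suc n)" using all by blast
  have "set ps \<subseteq> {..<n}" using pinv_vertices[OF sg ps(1)] .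
  hence "card (set ps) \<le> n" using card_mono[of "{..<n}" "set ps"] by simp
  moreover have "card (set ps) = Suc (Suc n)" using ps unfolding pinv_def by (simp add: distinct_card)
  ultimately show False by simp
qed



lemma card_ge2_two: assumes "card A \<ge> 2" shows "\<exists>x y. x \<in> A \<and> y \<in> A \<and> x \<noteq> y"
proof -
  have fin: "finite A" using assms by (metis card.infinite not_numeral_le_zero)
  obtain x where x: "x \<in> A" using assms by fastforce
  have "card (A - {x}) \<ge> 1" using assms fin x by simp
  hence "A - {x} \<noteq> {}" by (metis card.empty not_one_le_zero)
  then obtain y where "y \<in> A - {x}" by blast
  thus ?thesis using x by blast
qed

lemma prod_pair: "a \<noteq> b \<Longrightarrow> (\<Prod>w\<in>{a, b}. f w) = (f a * f b :: nat)"
  by simp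

theorem lemma13:
  fixes n b :: nat and T :: "nat set set"
  assumes "1 \<le> b" and "real b < real n / 2 - 1"
    and "T \<in> CT_star n b"
    and "\<forall>T'\<in>CT_star n b. M2 T' \<le> M2 T"
  shows "\<forall>v<n. deg T v = 3 \<longrightarrow> card {u. adj T u v \<and> deg T u = 4} \<le> 1"
proof (intro allI impI)
  fix v assume vn: "v < n" and dv: "deg T v = 3"
  have tree: "is_tree n T" and dle: "\<forall>w<n. deg T w \<le> 4" and bc: "card (branching_vertices n T) = b"
    using assms(3) unfolding CT_star_def by auto
  have n1: "n \<ge> 1" and sg: "simple_graph n T" and cn: "connected_graph n T" and nc: "\<not> has_cycle T"
    using tree unfolding is_tree_def by auto
  have sgE: "\<And>e. e \<in> T \<Longrightarrow> card e = 2 \<and> e \<subseteq> {..<n}" using sg unfolding simple_graph_def by blast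
  have "T \<subseteq> Pow {..<n}" using sgE by blast
  hence fin: "finite T" by (rule finite_subset) simp
  have ac: "acyc T" using no_cycle_imp_acyc[OF sg nc] .
  have edge_lt: "p < n \<and> q < n" if "{p, q} \<in> T" for p q
  proof -
    have "{p, q} \<subseteq> {..<n}" using sgE[OF that] by blast
    thus ?thesis by simp
  qed
  have edge_ne: "\<And>p q. {p, q} \<in> T \<Longrightarrow> p \<noteq> q"
  proof
    fix p q assume "{p, q} \<in> T" "p = q"
    hence "card {p, q} = 2" "p = q" using sgE by auto
    thus False by simp
  qed
  show "card {u. adj T u v \<and> deg T u = 4} \<le> 1"
  proof (rule ccontr)
    assume "\<not> ?thesis"
    hence "card {u. adj T u v \<and> deg T u = 4} \<ge> 2" by simp
    then obtain x y where xy: "x \<in> {u. adj T u v \<and> deg T u = 4}" "y \<in> {u. adj T u v \<and> deg T u = 4}" "x \<noteq> y"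
      using card_ge2_two by blast
    have xv: "{x, v} \<in> T" and dx: "deg T x = 4" and yv: "{y, v} \<in> T" and dy: "deg T y = 4"
      using xy unfolding adj_def by auto
    obtain r s where rs: "{r, s} \<in> T" "deg T r = 4" "deg T s \<noteq> 4"
        and rr: "reach (T - {{y, v}} - {{r, s}}) v r"
      using find_edge[OF sg nc fin xv xy(3) dx] by blast
    have rv: "r \<noteq> v" using rs(2) dv by auto
    have yvne: "y \<noteq> v" using edge_ne[OF yv] .
    have sr: "s \<noteq> r" using edge_ne[OF rs(1)] by auto
    have ry: "r \<noteq> y"
    proof
      assume "r = y"
      hence "reach (T - {{y, v}}) v y" using rr reach_mono by blast
      hence "reach (T - {{y, v}}) y v" by (rule reach_sym)
      thus False using ac yv unfolding acyc_def by blast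
    qed
    have sv: "s \<noteq> v"
    proof
      assume "s = v"
      hence "reach (T - {{r, v}}) v r" using rr reach_mono by blast
      hence "reach (T - {{r, v}}) r v" by (rule reach_sym)
      thus False using ac rs(1) \<open>s = v\<close> unfolding acyc_def by blast
    qed
    have rn: "r < n" and sn: "s < n" using edge_lt[OF rs(1)] by auto
    have yn: "y < n" using edge_lt[OF yv] by auto
    have "deg T s \<le> 4" using dle sn by blast
    hence ds: "deg T s \<le> 3" using rs(3) by arith
    let ?T1 = "insert {y, r} (T - {{y, v}})"
    have r1: "reach (T - {{y, v}}) v r" using rr reach_mono by blast
    have sg1: "simple_graph n ?T1" using rot_simple[OF sg yv rn ry] .
    have cn1: "connected_graph n ?T1" using rot_connected[OF cn yv yn r1] .
    have ac1: "acyc ?T1" using rot_acyc[OF ac yv r1] .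
    have ni1: "{y, r} \<notin> T - {{y, v}}" using rot_notin[OF ac yv r1] .
    have fin1: "finite ?T1" using fin by simp
    have rsyv: "{r, s} \<noteq> {y, v}"
    proof
      assume "{r, s} = {y, v}"
      hence "r \<in> {y, v}" by blast
      thus False using ry rv by blast
    qed
    have sr1: "{s, r} \<in> ?T1" using rs(1) rsyv by (auto simp: insert_commute)
    have sub2: "T - {{y, v}} - {{r, s}} \<subseteq> ?T1 - {{s, r}}" by (auto simp: insert_commute)
    have r2: "reach (?T1 - {{s, r}}) r v" using reach_sym[OF reach_mono[OF rr sub2]] .
    let ?T2 = "insert {s, v} (?T1 - {{s, r}})"
    have sg2: "simple_graph n ?T2" using rot_simple[OF sg1 sr1 vn sv[symmetric]] .
    have sn1: "s < n" using sn .
    have cn2: "connected_graph n ?T2" using rot_connected[OF cn1 sr1 sn r2] .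
    have ac2: "acyc ?T2" using rot_acyc[OF ac1 sr1 r2] .
    have ni2: "{s, v} \<notin> ?T1 - {{s, r}}" using rot_notin[OF ac1 sr1 r2] .
    have degeq: "deg ?T2 w = deg T w" for w
    proof -
      have "deg ?T1 w + (if w = v then 1 else 0) = deg T w + (if w = r then 1 else 0)"
        using rot_deg[OF fin yv ni1 yvne ry[symmetric] rv[symmetric]] .
      moreover have "deg ?T2 w + (if w = r then 1 else 0) = deg ?T1 w + (if w = v then 1 else 0)"
        using rot_deg[OF fin1 sr1 ni2 sr sv rv] .
      ultimately show ?thesis by linarith
    qed
    have T2in: "?T2 \<in> CT_star n b"
    proof -
      have "is_tree n ?T2" unfolding is_tree_def using n1 sg2 cn2 acyc_imp_no_cycle[OF ac2] by simp
      moreover have "\<forall>w<n. deg ?T2 w \<le> 4" using dle degeq by simp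
      moreover have "branching_vertices n ?T2 = branching_vertices n T"
        unfolding branching_vertices_def using degeq by simp
      ultimately show ?thesis unfolding CT_star_def using bc by simp
    qed
    define g where "g = (\<lambda>e. int (\<Prod>w\<in>e. deg T w))"
    have "M2 ?T2 = (\<Sum>e\<in>?T2. \<Prod>w\<in>e. deg T w)" unfolding M2_def using degeq by simp
    hence "int (M2 ?T2) = sum g ?T2" unfolding g_def by simp
    also have "\<dots> = sum g ?T1 - g {s, r} + g {s, v}" using rot_sum[OF fin1 sr1 ni2] .
    also have "sum g ?T1 = sum g T - g {y, v} + g {y, r}" using rot_sum[OF fin yv ni1] .
    also have "sum g T = int (M2 T)" unfolding g_def M2_def by simp
    finally have eq: "int (M2 ?T2) = int (M2 T) - g {y, v} + g {y, r} - g {s, r} + g {s, v}" .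
    have "g {y, v} = 12" unfolding g_def using yvne dy dv by simp
    moreover have "g {y, r} = 16" unfolding g_def using ry dy rs(2) by simp
    moreover have "g {s, r} = 4 * int (deg T s)" unfolding g_def using sr rs(2) by simp
    moreover have "g {s, v} = 3 * int (deg T s)" unfolding g_def using sv dv by simp
    ultimately have "int (M2 ?T2) = int (M2 T) + 4 - int (deg T s)" using eq by simp
    hence "M2 ?T2 > M2 T" using ds by simp
    moreover have "M2 ?T2 \<le> M2 T" using assms(4) T2in by blast
    ultimately show False by simp
  qed
qed

end
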